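(* Let $(T,A,m|_A)$ be a nonsingular open dynamical system with $m(A_\infty)=0$. Fix $\alpha\in(0,1)$ and a finite measurable partition $\mathcal B_n=\{B_1,\dots,B_n\}$ of $A$, and let $\hat A$ be the reduced domain obtained with test functions $\psi_j=\mathbf 1_{B_j}$. Then $\hat A$ is the union of those $B_k$ for which either $k\leadsto k$, or there is at least one $i$ with $i\leadsto i$ and $i\leadsto k$. In particular, $\hat A$ is measurable.
   Context: Let $(X,m)$ be a measure space, $A\subsetneq X$ measurable and $T:A\to X$ measurable such that: $H_0:=T(A)\setminus A$ is measurable; $m(A\cap T^{-1}H_0)>0$; $m(E)>0$ whenever $E\subseteq X$ is measurable with $m(T^{-1}E)>0$; and $T$ is locally finite-to-one (a nonsingular open dynamical system). Preimages are taken in $A$: $T^{-1}E=\{y\in A:T(y)\in E\}$. $A_n=\{x:x,T(x),\dots,T^n(x)\in A\}$, $A_\infty=\bigcap_nA_n$, $H_1=A\setminus A_1$. $\mathbf 1_{A_1}\psi\circ T$ is $\psi\circ T$ on $A_1$ and $0$ elsewhere in $A$. Define $\mathcal M^*:\mathbb R^{n+1}\to L^\infty(A;m)$ by $\mathcal M^*\lambda=\lambda_0\mathbf 1_{A_1}+\sum_{j=1}^n\lambda_j(\mathbf 1_{A_1}\psi_j\circ T-\alpha\psi_j)$ with $\psi_j=\mathbf 1_{B_j}$. The reduced domain $\hat A$ is obtained from $A$ by removing the support $\{\mathcal M^*\lambda\neq0\}$ of every $\mathcal M^*\lambda$ with $\lambda\in\mathbb R^{n+1}$, $\lambda_0=0$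 and $\mathcal M^*\lambda\le0$ $m$-a.e. Let $C$ be the $n\times n$ matrix $C_{kj}=m(B_k\cap T^{-1}B_j)$. Write $k\leadsto j$ if $(C^N)_{kj}>0$ for some integer $N>0$. *)

theory Defs
  imports "HOL-Analysis.Analysis"
begin

definition preim :: "'a set \<Rightarrow> ('a \<Rightarrow> 'a) \<Rightarrow> 'a set \<Rightarrow> 'a set" where
  "preim A T E = {y \<in> A. T y \<in> E}"

definition An :: "'a set \<Rightarrow> ('a \<Rightarrow> 'a) \<Rightarrow> nat \<Rightarrow> 'a set" where
  "An A T n = {x. \<forall>i\<le>n. (T ^^ i) x \<in> A}"

definition Ainf :: "'a set \<Rightarrow> ('a \<Rightarrow> 'a) \<Rightarrow> 'a set" where
  "Ainf A T = (\<Inter>n. An A T n)"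

definition locally_finite_to_one :: "'a measure \<Rightarrow> 'a set \<Rightarrow> ('a \<Rightarrow> 'a) \<Rightarrow> bool" where
  "locally_finite_to_one M A T \<longleftrightarrow> (\<forall>x\<in>space M. finite (preim A T {x}))"

definition nonsingular_open_system :: "'a measure \<Rightarrow> 'a set \<Rightarrow> ('a \<Rightarrow> 'a) \<Rightarrow> bool" where
  "nonsingular_open_system M A T \<longleftrightarrow>
     A \<in> sets M \<and> A \<subset> space M \<and>
     T \<in> restrict_space M A \<rightarrow>\<^sub>M M \<and>
     T ` A - A \<in> sets M \<and>
     emeasure M (preim A T (T ` A - A)) > 0 \<and>
     (\<forall>E\<in>sets M. emeasure M (preim A T E) > 0 \<longrightarrow> emeasure M E > 0) \<and>
     locally_finite_to_one M A T"

text \<open>The function M^* lambda (pointwise representative), with psi_j = indicator of B j,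
  j = 1..n; lambda_0 = lam 0.\<close>
definition Mstar :: "'a set \<Rightarrow> ('a \<Rightarrow> 'a) \<Rightarrow> (nat \<Rightarrow> 'a set) \<Rightarrow> nat \<Rightarrow> real
      \<Rightarrow> (nat \<Rightarrow> real) \<Rightarrow> 'a \<Rightarrow> real" where
  "Mstar A T B n \<alpha> lam x =
     lam 0 * indicator (An A T 1) x +
     (\<Sum>j\<in>{1..n}. lam j * (indicator (An A T 1) x * indicator (B j) (T x)
                             - \<alpha> * indicator (B j) x))"

definition reduced_domain :: "'a measure \<Rightarrow> 'a set \<Rightarrow> ('a \<Rightarrow> 'a) \<Rightarrow> (nat \<Rightarrow> 'a set)
      \<Rightarrow> nat \<Rightarrow> real \<Rightarrow> 'a set" where
  "reduced_domain M A T B n \<alpha> =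
     A - (\<Union>{ {x \<in> A. Mstar A T B n \<alpha> lam x \<noteq> 0} | lam.
              lam 0 = 0 \<and> (AE x in M. x \<in> A \<longrightarrow> Mstar A T B n \<alpha> lam x \<le> 0)})"

definition Cmat :: "'a measure \<Rightarrow> 'a set \<Rightarrow> ('a \<Rightarrow> 'a) \<Rightarrow> (nat \<Rightarrow> 'a set) \<Rightarrow> nat \<Rightarrow> nat \<Rightarrow> ennreal" where
  "Cmat M A T B k j = emeasure M (B k \<inter> preim A T (B j))"

fun matpow :: "(nat \<Rightarrow> nat \<Rightarrow> ennreal) \<Rightarrow> nat \<Rightarrow> nat \<Rightarrow> nat \<Rightarrow> nat \<Rightarrow> ennreal" where
  "matpow C n 0 = (\<lambda>k j. if k = j then 1 else 0)"
| "matpow C n (Suc N) = (\<lambda>k j. \<Sum>l\<in>{1..n}. matpow C n N k l * C l j)"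

definition leadsto :: "(nat \<Rightarrow> nat \<Rightarrow> ennreal) \<Rightarrow> nat \<Rightarrow> nat \<Rightarrow> nat \<Rightarrow> bool" where
  "leadsto C n k j \<longleftrightarrow> (\<exists>N>0. matpow C n N k j > 0)"

end

theory Submission
  imports Defs
begin

lemma matpow_Suc_pos:
  "matpow C n (Suc N) k j > 0 \<longleftrightarrow> (\<exists>l\<in>{1..n}. matpow C n N k l > 0 \<and> C l j > 0)"
  by (simp add: zero_less_iff_neq_zero[of "sum _ _"] ennreal_zero_less_mult_iff) (auto simp: zero_less_iff_neq_zero)

lemma matpow_0_pos: "matpow C n 0 k j > 0 \<longleftrightarrow> k = j"
  by simp

lemma matpow_trans:
  assumes "matpow C n a k l > 0" "matpow C n b l j > 0"
  shows "matpow C n (a + b) k j > 0"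
  using assms(2)
proof (induction b arbitrary: j)
  case 0
  then have "l = j" by (simp split: if_splits)
  then show ?case using assms(1) by simp
next
  case (Suc b)
  then obtain m where m: "m \<in> {1..n}" "matpow C n b l m > 0" "C m j > 0"
    using matpow_Suc_pos by blast
  then have "matpow C n (a + b) k m > 0" using Suc.IH by blast
  then show ?case using m matpow_Suc_pos[of C n "a+b" k j] by auto
qed

lemma matpow_one: assumes "k \<in> {1..n}" shows "matpow C n (Suc 0) k j = C k j"
  proof -
  have "matpow C n (Suc 0) k j = (\<Sum>l\<in>{1..n}. (if k = l then 1 else 0) * C l j)"
    by simp
  also have "\<dots> = (\<Sum>l\<in>{1..n}. if k = l then C l j else 0)"
    by (rule sum.cong) auto
  also have "\<dots> = C k j" using \<open>k \<in> {1..n}\<close> by (simp add: sum.delta)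
  finally show ?thesis .
qed

lemma leadsto_trans: "leadsto C n k l \<Longrightarrow> leadsto C n l j \<Longrightarrow> leadsto C n k j"
  unfolding leadsto_def using matpow_trans by (metis add_pos_pos)

lemma leadsto_edge: "k \<in> {1..n} \<Longrightarrow> C k j > 0 \<Longrightarrow> leadsto C n k j"
  unfolding leadsto_def using matpow_one[of k n C j] by (intro exI[of _ 1]) auto


lemma ae_null:
  assumes "AE x in M. P x" "S \<subseteq> space M" "\<And>x. x \<in> S \<Longrightarrow> \<not> P x"
  shows "emeasure M S = 0"
proof -
  from assms(1) obtain N where N: "{x \<in> space M. \<not> P x} \<subseteq> N" "emeasure M N = 0" "N \<in> sets M"
    by (rule AE_E)
  have "S \<subseteq> N" using N(1) assms(2,3) by blast
  then have "emeasure M S \<le> emeasure M N" using N(3) by (rule emeasure_mono)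
  then show ?thesis using N(2) by simp
qed

locale sysL =
  fixes M :: "'a measure" and A :: "'a set" and T :: "'a \<Rightarrow> 'a"
    and B :: "nat \<Rightarrow> 'a set" and n :: nat and \<alpha> :: real
  assumes sys: "nonsingular_open_system M A T"
    and Ainf0: "emeasure M (Ainf A T) = 0"
    and alpha0: "0 < \<alpha>" and alpha1: "\<alpha> < 1"
    and Bmeas: "\<forall>k\<in>{1..n}. B k \<in> sets M"
    and Bdisj: "\<forall>k\<in>{1..n}. \<forall>j\<in>{1..n}. k \<noteq> j \<longrightarrow> B k \<inter> B j = {}"
    and Bcover: "(\<Union>k\<in>{1..n}. B k) = A"
begin

abbreviation "C \<equiv> Cmat M A T B"

definition valid :: "(nat \<Rightarrow> real) \<Rightarrow> bool" where
  "valid lam \<longleftrightarrow> lam 0 = 0 \<and> (AE x in M. x \<in> A \<longrightarrow> Mstar A T B n \<alpha> lam x \<le> 0)"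

definition Rset where
  "Rset = {k \<in> {1..n}. leadsto C n k k \<or> (\<exists>i\<in>{1..n}. leadsto C n i i \<and> leadsto C n i k)}"

lemma A_sets: "A \<in> sets M" and A_sub: "A \<subseteq> space M"
  and Tm: "T \<in> restrict_space M A \<rightarrow>\<^sub>M M"
  and nons: "E \<in> sets M \<Longrightarrow> emeasure M (preim A T E) > 0 \<Longrightarrow> emeasure M E > 0"
  using sys unfolding nonsingular_open_system_def by auto

lemma T_space: "x \<in> A \<Longrightarrow> T x \<in> space M"
  using measurable_space[OF Tm, of x] A_sub by (auto simp: space_restrict_space)

lemma preim_sets: assumes "E \<in> sets M" shows "preim A T E \<in> sets M"
proof -
  have "T -` E \<inter> space (restrict_space M A) \<in> sets (restrict_space M A)"
    using measurable_sets[OF Tm assms] .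
  moreover have "T -` E \<inter> space (restrict_space M A) = preim A T E"
    using A_sub by (auto simp: preim_def space_restrict_space)
  ultimately show ?thesis using sets_restrict_space_iff[of A M] A_sets A_sub
    by (metis Int_absorb2)
qed

lemma nonsing0: "E \<in> sets M \<Longrightarrow> emeasure M E = 0 \<Longrightarrow> emeasure M (preim A T E) = 0"
  using nons by (metis not_gr_zero)

lemma B_sub: "k \<in> {1..n} \<Longrightarrow> B k \<subseteq> A" using Bcover by blast
lemma B_sets: "k \<in> {1..n} \<Longrightarrow> B k \<in> sets M" using Bmeas by blast
lemma A_cover: "x \<in> A \<Longrightarrow> \<exists>k\<in>{1..n}. x \<in> B k" using Bcover by blast
lemma B_unique: "k \<in> {1..n} \<Longrightarrow> j \<in> {1..n} \<Longrightarrow> x \<in> B k \<Longrightarrow> x \<in> B j \<Longrightarrow> k = j"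
  using Bdisj by blast

lemma mstar_typ:
  assumes "lam 0 = 0" "k \<in> {1..n}" "j \<in> {1..n}" "x \<in> B k" "T x \<in> B j"
  shows "Mstar A T B n \<alpha> lam x = lam j - \<alpha> * lam k"
proof -
  have xA: "x \<in> A" using B_sub[OF assms(2)] assms(4) by (rule subsetD)
  have TxA: "T x \<in> A" using B_sub[OF assms(3)] assms(5) by (rule subsetD)
  have "x \<in> An A T 1" unfolding An_def
  proof clarify
    fix i :: nat assume "i \<le> 1"
    then have "i = 0 \<or> i = 1" by auto
    then show "(T ^^ i) x \<in> A" using xA TxA by (elim disjE) simp_all
  qed
  then have ind: "indicator (An A T 1) x = (1::real)" by simp
  have u1: "\<And>i. i \<in> {1..n} \<Longrightarrow> T x \<in> B i \<Longrightarrow> i = j" using B_unique[OF _ assms(3) _ assms(5)] by metis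
  have u2: "\<And>i. i \<in> {1..n} \<Longrightarrow> x \<in> B i \<Longrightarrow> i = k" using B_unique[OF _ assms(2) _ assms(4)] by metis
  have "(\<Sum>i\<in>{1..n}. lam i * (indicator (An A T 1) x * indicator (B i) (T x) - \<alpha> * indicator (B i) x))
      = (\<Sum>i\<in>{1..n}. (if i = j then lam i else 0) - (if i = k then \<alpha> * lam i else 0))"
  proof (rule sum.cong[OF refl])
    fix i assume i: "i \<in> {1..n}"
    show "lam i * (indicator (An A T 1) x * indicator (B i) (T x) - \<alpha> * indicator (B i) x)
        = (if i = j then lam i else 0) - (if i = k then \<alpha> * lam i else 0)"
    proof -
      have a: "indicator (B i) (T x) = (if i = j then 1 else (0::real))"
      proof (cases "i = j")
        case True then show ?thesis using assms(5) by simp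
      next
        case False then have "T x \<notin> B i" using u1[OF i] by blast
        then show ?thesis using False by simp
      qed
      have b: "indicator (B i) x = (if i = k then 1 else (0::real))"
      proof (cases "i = k")
        case True then show ?thesis using assms(4) by simp
      next
        case False then have "x \<notin> B i" using u2[OF i] by blast
        then show ?thesis using False by simp
      qed
      show ?thesis unfolding a b ind by (simp add: algebra_simps)
    qed
  qed
  also have "\<dots> = lam j - \<alpha> * lam k" using assms by (simp add: sum_subtractf sum.delta)
  finally show ?thesis using assms(1) by (simp add: Mstar_def)
qed

lemma mstar_esc:
  assumes "lam 0 = 0" "k \<in> {1..n}" "x \<in> B k" "T x \<notin> A"
  shows "Mstar A T B n \<alpha> lam x = - \<alpha> * lam k"
proof -
  have "x \<notin> An A T 1" unfolding An_def
  proof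
    assume "x \<in> {x. \<forall>i\<le>1. (T ^^ i) x \<in> A}"
    then have "\<forall>i\<le>1. (T ^^ i) x \<in> A" by simp
    then have "(T ^^ 1) x \<in> A" by (metis order_refl)
    then show False using assms(4) by simp
  qed
  then have ind: "indicator (An A T 1) x = (0::real)" by simp
  have u2: "\<And>i. i \<in> {1..n} \<Longrightarrow> x \<in> B i \<Longrightarrow> i = k" using B_unique[OF _ assms(2) _ assms(3)] by metis
  have "(\<Sum>i\<in>{1..n}. lam i * (indicator (An A T 1) x * indicator (B i) (T x) - \<alpha> * indicator (B i) x))
      = (\<Sum>i\<in>{1..n}. - (if i = k then \<alpha> * lam i else 0))"
  proof (rule sum.cong[OF refl])
    fix i assume i: "i \<in> {1..n}"
    show "lam i * (indicator (An A T 1) x * indicator (B i) (T x) - \<alpha> * indicator (B i) x)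
        = - (if i = k then \<alpha> * lam i else 0)"
    proof -
      have b: "indicator (B i) x = (if i = k then 1 else (0::real))"
      proof (cases "i = k")
        case True then show ?thesis using assms(3) by simp
      next
        case False then have "x \<notin> B i" using u2[OF i] by blast
        then show ?thesis using False by simp
      qed
      show ?thesis unfolding b ind by (simp add: algebra_simps)
    qed
  qed
  also have "\<dots> = - \<alpha> * lam k" using assms by (simp add: sum_negf sum.delta)
  finally show ?thesis using assms(1) by (simp add: Mstar_def)
qed


lemma An_Suc: "An A T (Suc m) = preim A T (An A T m)"
proof (intro set_eqI iffI)
  fix x assume x: "x \<in> An A T (Suc m)"
  then have xA: "x \<in> A" unfolding An_def by (metis (mono_tags) mem_Collect_eq zero_le funpow_0)
  have "\<forall>i\<le>m. (T ^^ i) (T x) \<in> A"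
  proof clarify
    fix i assume "i \<le> m"
    then have "Suc i \<le> Suc m" by simp
    then have "(T ^^ Suc i) x \<in> A" using x unfolding An_def by blast
    then show "(T ^^ i) (T x) \<in> A" by (simp add: funpow_Suc_right del: funpow.simps)
  qed
  then show "x \<in> preim A T (An A T m)" using xA unfolding preim_def An_def by simp
next
  fix x assume x: "x \<in> preim A T (An A T m)"
  then have xA: "x \<in> A" and h: "\<forall>i\<le>m. (T ^^ i) (T x) \<in> A"
    unfolding preim_def An_def by auto
  have "(T ^^ i) x \<in> A" if "i \<le> Suc m" for i
  proof (cases i)
    case 0 then show ?thesis using xA by simp
  next
    case (Suc i')
    then have "i' \<le> m" using that by simp
    then have "(T ^^ i') (T x) \<in> A" using h by blast
    then show ?thesis using Suc by (simp add: funpow_Suc_right del: funpow.simps)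
  qed
  then show "x \<in> An A T (Suc m)" unfolding An_def by blast
qed

lemma An_sets: "An A T m \<in> sets M"
proof (induction m)
  case 0
  have "An A T 0 = A" unfolding An_def by auto
  then show ?case using A_sets by simp
next
  case (Suc m)
  then show ?case unfolding An_Suc by (rule preim_sets)
qed

lemma Ainf_sets: "Ainf A T \<in> sets M"
  unfolding Ainf_def using An_sets by (intro sets.countable_INT) auto

lemma valid_edge:
  assumes v: "valid lam" and k: "k \<in> {1..n}" and j: "j \<in> {1..n}" and c: "C k j > 0"
  shows "lam j \<le> \<alpha> * lam k"
proof (rule ccontr)
  assume neg: "\<not> lam j \<le> \<alpha> * lam k"
  let ?S = "B k \<inter> preim A T (B j)"
  have "emeasure M ?S = 0"
  proof (rule ae_null)
    show "AE x in M. x \<in> A \<longrightarrow> Mstar A T B n \<alpha> lam x \<le> 0" using v unfolding valid_def by simp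
    show "?S \<subseteq> space M" using B_sub[OF k] A_sub by blast
    fix x assume x: "x \<in> ?S"
    then have "Mstar A T B n \<alpha> lam x = lam j - \<alpha> * lam k"
      using mstar_typ[of lam k j x] v k j unfolding valid_def preim_def by blast
    then show "\<not> (x \<in> A \<longrightarrow> Mstar A T B n \<alpha> lam x \<le> 0)" using neg x unfolding preim_def by auto
  qed
  then show False using c unfolding Cmat_def by simp
qed

lemma valid_nonneg:
  assumes v: "valid lam" and k: "k \<in> {1..n}" and pos: "emeasure M (B k) > 0"
  shows "lam k \<ge> 0"
proof (rule ccontr)
  assume "\<not> lam k \<ge> 0"
  then have neg: "lam k < 0" by simp
  define S where "S = {i \<in> {1..n}. lam i < 0}"
  define U where "U = (\<Union>i\<in>S. B i)"
  have kS: "k \<in> S" using k neg unfolding S_def by simp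
  have U_sets: "U \<in> sets M" unfolding U_def S_def using B_sets by auto
  have U_A: "U \<subseteq> A" unfolding U_def S_def using B_sub by blast
  define N0 where "N0 = U - preim A T U"
  have N0_sets: "N0 \<in> sets M" unfolding N0_def using U_sets preim_sets[OF U_sets] by auto
  have N0_0: "emeasure M N0 = 0"
  proof (rule ae_null)
    show "AE x in M. x \<in> A \<longrightarrow> Mstar A T B n \<alpha> lam x \<le> 0" using v unfolding valid_def by simp
    show "N0 \<subseteq> space M" using U_A A_sub unfolding N0_def by blast
    fix x assume x: "x \<in> N0"
    then obtain i where i: "i \<in> S" "x \<in> B i" unfolding N0_def U_def by blast
    have i1: "i \<in> {1..n}" and li: "lam i < 0" using i(1) unfolding S_def by auto
    have xA: "x \<in> A" using B_sub[OF i1] i(2) by blast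
    have l0: "lam 0 = 0" using v unfolding valid_def by simp
    have "Mstar A T B n \<alpha> lam x > 0"
    proof (cases "T x \<in> A")
      case False
      then have "Mstar A T B n \<alpha> lam x = - \<alpha> * lam i" using mstar_esc[of lam i x] l0 i1 i(2) by simp
      then show ?thesis using li alpha0 by (simp add: mult_pos_neg)
    next
      case True
      then obtain j where j: "j \<in> {1..n}" "T x \<in> B j" using A_cover by blast
      have "T x \<notin> U" using x xA unfolding N0_def preim_def by blast
      then have "j \<notin> S" using j unfolding U_def by blast
      then have "lam j \<ge> 0" using j unfolding S_def by auto
      moreover have "Mstar A T B n \<alpha> lam x = lam j - \<alpha> * lam i" using mstar_typ[of lam i j x] l0 i1 j i(2) by simp
      ultimately show ?thesis using li alpha0 mult_pos_neg[of \<alpha> "lam i"] by simp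
    qed
    then show "\<not> (x \<in> A \<longrightarrow> Mstar A T B n \<alpha> lam x \<le> 0)" using xA by simp
  qed
  define N where "N r = ((\<lambda>E. preim A T E) ^^ r) N0" for r
  have N_Suc: "N (Suc r) = preim A T (N r)" for r unfolding N_def by simp
  have N_prop: "N r \<in> sets M \<and> emeasure M (N r) = 0" for r
  proof (induction r)
    case 0 then show ?case using N0_sets N0_0 unfolding N_def by simp
  next
    case (Suc r) then show ?case unfolding N_Suc using preim_sets nonsing0 by blast
  qed
  have key: "(T ^^ r) y \<in> N0 \<Longrightarrow> (\<forall>m<r. (T ^^ m) y \<in> A) \<Longrightarrow> y \<in> N r" for r y
  proof (induction r arbitrary: y)
    case 0 then show ?case unfolding N_def by simp
  next
    case (Suc r)
    have "(T ^^ r) (T y) \<in> N0" using Suc.prems(1) by (simp add: funpow_Suc_right del: funpow.simps)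
    moreover have "\<forall>m<r. (T ^^ m) (T y) \<in> A"
    proof clarify
      fix m assume "m < r"
      then have "Suc m < Suc r" by simp
      then have "(T ^^ Suc m) y \<in> A" using Suc.prems(2) by blast
      then show "(T ^^ m) (T y) \<in> A" by (simp add: funpow_Suc_right del: funpow.simps)
    qed
    ultimately have "T y \<in> N r" using Suc.IH by blast
    moreover have "y \<in> A" using Suc.prems(2) by (metis funpow_0 zero_less_Suc)
    ultimately show ?case unfolding N_Suc preim_def by blast
  qed
  have cover: "U \<subseteq> Ainf A T \<union> (\<Union>r. N r)"
  proof
    fix x assume xU: "x \<in> U"
    show "x \<in> Ainf A T \<union> (\<Union>r. N r)"
    proof (cases "x \<in> (\<Union>r. N r)")
      case True then show ?thesis by blast
    next
      case False
      have all: "\<forall>m\<le>i. (T ^^ m) x \<in> U" for i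
      proof (induction i)
        case 0 then show ?case using xU by simp
      next
        case (Suc i)
        have inA: "\<forall>m<Suc i. (T ^^ m) x \<in> A" using Suc.IH U_A by (auto simp: less_Suc_eq_le)
        have "(T ^^ Suc i) x \<in> U"
        proof (rule ccontr)
          assume nU: "(T ^^ Suc i) x \<notin> U"
          have "(T ^^ i) x \<in> U" using Suc.IH by simp
          moreover have "T ((T ^^ i) x) \<notin> U" using nU by simp
          ultimately have "(T ^^ i) x \<in> N0" unfolding N0_def preim_def by blast
          then have "x \<in> N i" using key[of i x] inA by simp
          then show False using False by blast
        qed
        then show ?case using Suc.IH by (auto simp: le_Suc_eq)
      qed
      have "x \<in> Ainf A T" unfolding Ainf_def An_def
      proof (clarify)
        fix r i assume "i \<le> (r::nat)"
        have "(T ^^ i) x \<in> U" using all[of i] by simp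
        then show "(T ^^ i) x \<in> A" using U_A by blast
      qed
      then show ?thesis by blast
    qed
  qed
  have UN0: "emeasure M (\<Union>r. N r) = 0"
    by (rule emeasure_UN_eq_0) (use N_prop in auto)
  have UNs: "(\<Union>r. N r) \<in> sets M" using N_prop by auto
  have "emeasure M (B k) \<le> emeasure M U"
    by (rule emeasure_mono) (use kS U_sets in \<open>auto simp: U_def\<close>)
  also have "\<dots> \<le> emeasure M (Ainf A T \<union> (\<Union>r. N r))"
    by (rule emeasure_mono[OF cover]) (use Ainf_sets UNs in auto)
  also have "\<dots> \<le> emeasure M (Ainf A T) + emeasure M (\<Union>r. N r)"
    by (rule emeasure_subadditive[OF Ainf_sets UNs])
  also have "\<dots> = 0" using Ainf0 UN0 by simp
  finally show False using pos by simp
qed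



lemma edge_pos:
  assumes k: "k \<in> {1..n}" and c: "C l k > 0"
  shows "emeasure M (B k) > 0"
proof -
  have "C l k \<le> emeasure M (preim A T (B k))"
    unfolding Cmat_def by (rule emeasure_mono) (auto intro: preim_sets B_sets k)
  then have "emeasure M (preim A T (B k)) > 0" using c by simp
  then show ?thesis using nons B_sets[OF k] by blast
qed

lemma matpow_pos_meas:
  assumes k: "k \<in> {1..n}" and N: "N > 0" and p: "matpow C n N i k > 0"
  shows "emeasure M (B k) > 0"
proof -
  obtain N' where "N = Suc N'" using N gr0_implies_Suc by blast
  then obtain l where "C l k > 0" using p matpow_Suc_pos[of C n N' i k] by blast
  then show ?thesis using edge_pos k by blast
qed

lemma valid_path:
  assumes v: "valid lam"
  shows "k \<in> {1..n} \<Longrightarrow> matpow C n N i k > 0 \<Longrightarrow> lam k \<le> \<alpha> ^ N * lam i"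
proof (induction N arbitrary: k)
  case 0 then show ?case by (simp split: if_splits)
next
  case (Suc N)
  then obtain l where l: "l \<in> {1..n}" "matpow C n N i l > 0" "C l k > 0"
    using matpow_Suc_pos[of C n N i k] by blast
  have "lam k \<le> \<alpha> * lam l" using valid_edge[OF v l(1) Suc.prems(1) l(3)] .
  also have "\<dots> \<le> \<alpha> * (\<alpha> ^ N * lam i)" using Suc.IH[OF l(1,2)] alpha0 by simp
  finally show ?case by (simp add: mult.assoc)
qed

lemma valid_self:
  assumes v: "valid lam" and i: "i \<in> {1..n}" and l: "leadsto C n i i"
  shows "lam i = 0"
proof -
  obtain N where N: "N > 0" "matpow C n N i i > 0" using l unfolding leadsto_def by blast
  have ge: "lam i \<ge> 0" using valid_nonneg[OF v i matpow_pos_meas[OF i N]] .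
  have le: "lam i \<le> \<alpha> ^ N * lam i" using valid_path[OF v i N(2)] .
  have "\<alpha> ^ N < 1" using alpha0 alpha1 N(1) by (simp add: power_less_one_iff)
  show ?thesis
  proof (rule ccontr)
    assume "lam i \<noteq> 0"
    then have "lam i > 0" using ge by simp
    then have "\<alpha> ^ N * lam i < 1 * lam i" using \<open>\<alpha> ^ N < 1\<close> by (intro mult_strict_right_mono) auto
    then show False using le by simp
  qed
qed

lemma valid_R:
  assumes v: "valid lam" and k: "k \<in> Rset"
  shows "lam k = 0"
proof -
  have k1: "k \<in> {1..n}" using k unfolding Rset_def by simp
  show ?thesis
  proof (cases "leadsto C n k k")
    case True then show ?thesis using valid_self[OF v k1] by blast
  next
    case False
    then obtain i where i: "i \<in> {1..n}" "leadsto C n i i" "leadsto C n i k"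
      using k unfolding Rset_def by blast
    have li: "lam i = 0" using valid_self[OF v i(1,2)] .
    obtain N where N: "N > 0" "matpow C n N i k > 0" using i(3) unfolding leadsto_def by blast
    have "lam k \<le> 0" using valid_path[OF v k1 N(2)] li by simp
    moreover have "lam k \<ge> 0" using valid_nonneg[OF v k1 matpow_pos_meas[OF k1 N]] .
    ultimately show ?thesis by simp
  qed
qed

lemma R_closed:
  assumes k: "k \<in> Rset" and j: "j \<in> {1..n}" and c: "C k j > 0"
  shows "j \<in> Rset"
proof -
  have k1: "k \<in> {1..n}" using k unfolding Rset_def by simp
  have e: "leadsto C n k j" using leadsto_edge[of k n "C" j, OF k1 c] .
  from k have "leadsto C n k k \<or> (\<exists>i\<in>{1..n}. leadsto C n i i \<and> leadsto C n i k)"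
    unfolding Rset_def by simp
  then show ?thesis
  proof
    assume "leadsto C n k k"
    then show ?thesis using j k1 e unfolding Rset_def by blast
  next
    assume "\<exists>i\<in>{1..n}. leadsto C n i i \<and> leadsto C n i k"
    then obtain i where "i \<in> {1..n}" "leadsto C n i i" "leadsto C n i k" by blast
    then show ?thesis using j e leadsto_trans unfolding Rset_def by blast
  qed
qed

definition reach where "reach k = {j \<in> {1..n}. leadsto C n k j}"
definition lam0 :: "nat \<Rightarrow> real" where
  "lam0 k = (if k \<in> {1..n} \<and> k \<notin> Rset then (2 / \<alpha>) ^ card (reach k) else 0)"

lemma lam0_nonneg: "lam0 k \<ge> 0"
  unfolding lam0_def using alpha0 by auto

lemma lam0_pos: "k \<in> {1..n} \<Longrightarrow> k \<notin> Rset \<Longrightarrow> lam0 k > 0"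
  unfolding lam0_def using alpha0 by auto

lemma lam0_R: "k \<in> Rset \<Longrightarrow> lam0 k = 0"
  unfolding lam0_def by auto

lemma lam0_edge:
  assumes k: "k \<in> {1..n}" "k \<notin> Rset" and j: "j \<in> {1..n}" and c: "C k j > 0"
  shows "lam0 j < \<alpha> * lam0 k"
proof (cases "j \<in> Rset")
  case True
  then show ?thesis using lam0_R lam0_pos[OF k] alpha0 by simp
next
  case False
  have e: "leadsto C n k j" using leadsto_edge[of k n "C" j, OF k(1) c] .
  have sub: "reach j \<subseteq> reach k" unfolding reach_def using e leadsto_trans by blast
  have "j \<in> reach k" unfolding reach_def using e j by simp
  moreover have "j \<notin> reach j" using False j unfolding reach_def Rset_def by simp
  ultimately have "reach j \<subset> reach k" using sub by blast
  then have lt: "card (reach j) < card (reach k)"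
    by (rule psubset_card_mono[rotated]) (simp add: reach_def)
  let ?c = "2 / \<alpha>"
  have c1: "?c \<ge> 1" using alpha0 alpha1 by (simp add: field_simps)
  have "?c ^ Suc (card (reach j)) \<le> ?c ^ card (reach k)"
    using lt c1 by (intro power_increasing) auto
  then have "\<alpha> * ?c ^ Suc (card (reach j)) \<le> \<alpha> * ?c ^ card (reach k)"
    using alpha0 by (intro mult_left_mono) auto
  moreover have "\<alpha> * ?c ^ Suc (card (reach j)) = 2 * ?c ^ card (reach j)"
    using alpha0 by simp
  moreover have "?c ^ card (reach j) > 0" using alpha0 by simp
  ultimately have "?c ^ card (reach j) < \<alpha> * ?c ^ card (reach k)" by linarith
  then show ?thesis unfolding lam0_def using k j False by simp
qed

lemma AE_typ: "AE x in M. \<forall>k\<in>{1..n}. \<forall>j\<in>{1..n}. C k j = 0 \<longrightarrow> x \<notin> B k \<inter> preim A T (B j)"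
proof (intro AE_finite_allI)
  fix k j assume k: "k \<in> {1..n}" and j: "j \<in> {1..n}"
  show "AE x in M. C k j = 0 \<longrightarrow> x \<notin> B k \<inter> preim A T (B j)"
  proof (cases "C k j = 0")
    case True
    have "B k \<inter> preim A T (B j) \<in> null_sets M"
      using True B_sets[OF k] preim_sets[OF B_sets[OF j]] unfolding Cmat_def by auto
    then have "AE x in M. x \<notin> B k \<inter> preim A T (B j)" by (rule AE_not_in)
    then show ?thesis by (rule eventually_mono) simp
  next
    case False then show ?thesis by simp
  qed
qed simp_all

lemma lam0_valid: "valid lam0"
  unfolding valid_def
proof
  show l0: "lam0 0 = 0" unfolding lam0_def by simp
  show "AE x in M. x \<in> A \<longrightarrow> Mstar A T B n \<alpha> lam0 x \<le> 0"
    using AE_typ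
  proof (rule eventually_mono)
    fix x assume h: "\<forall>k\<in>{1..n}. \<forall>j\<in>{1..n}. C k j = 0 \<longrightarrow> x \<notin> B k \<inter> preim A T (B j)"
    show "x \<in> A \<longrightarrow> Mstar A T B n \<alpha> lam0 x \<le> 0"
    proof
      assume xA: "x \<in> A"
      then obtain k where k: "k \<in> {1..n}" "x \<in> B k" using A_cover by blast
      show "Mstar A T B n \<alpha> lam0 x \<le> 0"
      proof (cases "T x \<in> A")
        case False
        then show ?thesis using mstar_esc[of lam0 k x] l0 k lam0_nonneg[of k] alpha0 by simp
      next
        case True
        then obtain j where j: "j \<in> {1..n}" "T x \<in> B j" using A_cover by blast
        have m: "Mstar A T B n \<alpha> lam0 x = lam0 j - \<alpha> * lam0 k"
          using mstar_typ[of lam0 k j x] l0 k j by simp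
        have "C k j \<noteq> 0" using h k j xA unfolding preim_def by blast
        then have c: "C k j > 0" by (simp add: zero_less_iff_neq_zero)
        show ?thesis
        proof (cases "k \<in> Rset")
          case True
          then have "j \<in> Rset" using R_closed j c by blast
          then show ?thesis using m lam0_R True by simp
        next
          case False
          then show ?thesis using m lam0_edge[OF k(1) False j(1) c] by simp
        qed
      qed
    qed
  qed
qed

lemma RD_iff:
  "x \<in> reduced_domain M A T B n \<alpha> \<longleftrightarrow> x \<in> A \<and> (\<forall>lam. valid lam \<longrightarrow> Mstar A T B n \<alpha> lam x = 0)"
  unfolding reduced_domain_def valid_def by blast



lemma RD_sets: "reduced_domain M A T B n \<alpha> \<in> sets M"
proof -
  define G1 where "G1 k j \<longleftrightarrow> (\<forall>lam. valid lam \<longrightarrow> lam j - \<alpha> * lam k = 0)" for k j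
  define G2 where "G2 k \<longleftrightarrow> (\<forall>lam. valid lam \<longrightarrow> lam k = 0)" for k
  let ?U1 = "\<Union>k\<in>{1..n}. \<Union>j\<in>{1..n}. if G1 k j then B k \<inter> preim A T (B j) else {}"
  let ?U2 = "\<Union>k\<in>{1..n}. if G2 k then B k \<inter> preim A T (space M - A) else {}"
  have eq: "reduced_domain M A T B n \<alpha> = ?U1 \<union> ?U2"
  proof (intro set_eqI iffI)
    fix x assume x: "x \<in> reduced_domain M A T B n \<alpha>"
    then have xA: "x \<in> A" and z: "\<And>lam. valid lam \<Longrightarrow> Mstar A T B n \<alpha> lam x = 0"
      using RD_iff by auto
    obtain k where k: "k \<in> {1..n}" "x \<in> B k" using A_cover xA by blast
    show "x \<in> ?U1 \<union> ?U2"
    proof (cases "T x \<in> A")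
      case True
      then obtain j where j: "j \<in> {1..n}" "T x \<in> B j" using A_cover by blast
      have "G1 k j" unfolding G1_def
      proof clarify
        fix lam assume v: "valid lam"
        then have "lam 0 = 0" unfolding valid_def by simp
        then show "lam j - \<alpha> * lam k = 0" using z[OF v] mstar_typ[of lam k j x] k j by simp
      qed
      then have "x \<in> (if G1 k j then B k \<inter> preim A T (B j) else {})"
        using k j xA unfolding preim_def by auto
      then have "x \<in> ?U1" using k j by blast
      then show ?thesis by blast
    next
      case False
      have "G2 k" unfolding G2_def
      proof clarify
        fix lam assume v: "valid lam"
        then have "lam 0 = 0" unfolding valid_def by simp
        then have "- \<alpha> * lam k = 0" using z[OF v] mstar_esc[of lam k x] k False by simp
        then show "lam k = 0" using alpha0 by simp
      qed
      then have "x \<in> ?U2" using k xA False T_space[OF xA] unfolding preim_def by auto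
      then show ?thesis by blast
    qed
  next
    fix x assume "x \<in> ?U1 \<union> ?U2"
    then show "x \<in> reduced_domain M A T B n \<alpha>"
    proof
      assume "x \<in> ?U1"
      then obtain k j where kj: "k \<in> {1..n}" "j \<in> {1..n}" "G1 k j" "x \<in> B k" "T x \<in> B j" "x \<in> A"
        unfolding preim_def by (auto split: if_splits)
      show ?thesis unfolding RD_iff
      proof (intro conjI allI impI)
        show "x \<in> A" by fact
        fix lam assume v: "valid lam"
        then have "lam 0 = 0" unfolding valid_def by simp
        then show "Mstar A T B n \<alpha> lam x = 0"
          using mstar_typ[of lam k j x] kj v unfolding G1_def by simp
      qed
    next
      assume "x \<in> ?U2"
      then obtain k where kj: "k \<in> {1..n}" "G2 k" "x \<in> B k" "T x \<notin> A" "x \<in> A"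
        unfolding preim_def by (auto split: if_splits)
      show ?thesis unfolding RD_iff
      proof (intro conjI allI impI)
        show "x \<in> A" by fact
        fix lam assume v: "valid lam"
        then have "lam 0 = 0" unfolding valid_def by simp
        then show "Mstar A T B n \<alpha> lam x = 0"
          using mstar_esc[of lam k x] kj v unfolding G2_def by simp
      qed
    qed
  qed
  have s1: "?U1 \<in> sets M"
    using B_sets preim_sets by (auto intro!: sets.finite_UN sets.Int)
  have s2: "?U2 \<in> sets M"
    using B_sets preim_sets A_sets by (auto intro!: sets.finite_UN sets.Int)
  show ?thesis unfolding eq using s1 s2 by auto
qed

lemma RD_ae: "AE x in M. x \<in> reduced_domain M A T B n \<alpha> \<longleftrightarrow> x \<in> (\<Union>k\<in>Rset. B k)"
  using AE_typ
proof (rule eventually_mono)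
  fix x assume h: "\<forall>k\<in>{1..n}. \<forall>j\<in>{1..n}. C k j = 0 \<longrightarrow> x \<notin> B k \<inter> preim A T (B j)"
  show "x \<in> reduced_domain M A T B n \<alpha> \<longleftrightarrow> x \<in> (\<Union>k\<in>Rset. B k)"
  proof (cases "x \<in> A")
    case False
    have "(\<Union>k\<in>Rset. B k) \<subseteq> A" using B_sub unfolding Rset_def by blast
    then show ?thesis using False RD_iff by blast
  next
    case xA: True
    obtain k where k: "k \<in> {1..n}" "x \<in> B k" using A_cover xA by blast
    have rhs: "x \<in> (\<Union>k\<in>Rset. B k) \<longleftrightarrow> k \<in> Rset"
    proof
      assume "x \<in> (\<Union>k\<in>Rset. B k)"
      then obtain k' where "k' \<in> Rset" "x \<in> B k'" by blast
      moreover then have "k' = k" using B_unique[of k' k x] k unfolding Rset_def by blast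
      ultimately show "k \<in> Rset" by simp
    qed (use k in blast)
    have l00: "lam0 0 = 0" using lam0_valid unfolding valid_def by simp
    show ?thesis
    proof (cases "T x \<in> A")
      case True
      then obtain j where j: "j \<in> {1..n}" "T x \<in> B j" using A_cover by blast
      have "C k j \<noteq> 0" using h k j xA unfolding preim_def by blast
      then have c: "C k j > 0" by (simp add: zero_less_iff_neq_zero)
      show ?thesis
      proof (cases "k \<in> Rset")
        case True
        then have jR: "j \<in> Rset" using R_closed j c by blast
        have "x \<in> reduced_domain M A T B n \<alpha>" unfolding RD_iff
        proof (intro conjI allI impI)
          show "x \<in> A" by fact
          fix lam assume v: "valid lam"
          then have "lam 0 = 0" unfolding valid_def by simp
          then show "Mstar A T B n \<alpha> lam x = 0"
            using mstar_typ[of lam k j x] k j valid_R[OF v True] valid_R[OF v jR] by simp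
        qed
        then show ?thesis using rhs True by simp
      next
        case False
        have "Mstar A T B n \<alpha> lam0 x = lam0 j - \<alpha> * lam0 k"
          using mstar_typ[of lam0 k j x] l00 k j by simp
        then have "Mstar A T B n \<alpha> lam0 x \<noteq> 0" using lam0_edge[OF k(1) False j(1) c] by simp
        then have "x \<notin> reduced_domain M A T B n \<alpha>" using RD_iff lam0_valid by blast
        then show ?thesis using rhs False by simp
      qed
    next
      case False
      have m: "Mstar A T B n \<alpha> lam x = - \<alpha> * lam k" if "lam 0 = 0" for lam
        using mstar_esc[of lam k x] that k False by simp
      show ?thesis
      proof (cases "k \<in> Rset")
        case True
        have "x \<in> reduced_domain M A T B n \<alpha>" unfolding RD_iff
        proof (intro conjI allI impI)
          show "x \<in> A" by fact
          fix lam assume v: "valid lam"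
          then have "lam 0 = 0" unfolding valid_def by simp
          then show "Mstar A T B n \<alpha> lam x = 0" using m valid_R[OF v True] by simp
        qed
        then show ?thesis using rhs True by simp
      next
        case kR: False
        have "Mstar A T B n \<alpha> lam0 x \<noteq> 0" using m[of lam0, OF l00] lam0_pos[OF k(1) kR] alpha0 by simp
        then have "x \<notin> reduced_domain M A T B n \<alpha>" using RD_iff lam0_valid by blast
        then show ?thesis using rhs kR by simp
      qed
    qed
  qed
qed


end

theorem lemma6:
  fixes M :: "'a measure" and A :: "'a set" and T :: "'a \<Rightarrow> 'a"
    and B :: "nat \<Rightarrow> 'a set" and n :: nat and \<alpha> :: real
  assumes sys: "nonsingular_open_system M A T"
    and Ainf0: "emeasure M (Ainf A T) = 0"
    and alpha: "0 < \<alpha>" "\<alpha> < 1"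
    and Bmeas: "\<forall>k\<in>{1..n}. B k \<in> sets M"
    and Bdisj: "\<forall>k\<in>{1..n}. \<forall>j\<in>{1..n}. k \<noteq> j \<longrightarrow> B k \<inter> B j = {}"
    and Bcover: "(\<Union>k\<in>{1..n}. B k) = A"
  shows "reduced_domain M A T B n \<alpha> \<in> sets M \<and>
         (AE x in M. x \<in> reduced_domain M A T B n \<alpha> \<longleftrightarrow>
            x \<in> (\<Union>k\<in>{k \<in> {1..n}. leadsto (Cmat M A T B) n k k \<or>
                     (\<exists>i\<in>{1..n}. leadsto (Cmat M A T B) n i i \<and> leadsto (Cmat M A T B) n i k)}. B k))"
proof -
  interpret L: sysL M A T B n \<alpha>
    using assms by unfold_locales auto
  show ?thesis using L.RD_sets L.RD_ae unfolding L.Rset_def by simp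
qed

end
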